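(* Let $d\in\mathbb N$, let $\emptyset\neq\Theta\subset\mathbb R^d$ be a $C^1$-hypersurface of positive reach, and let $\mu\colon\mathbb R^d\to\mathbb R^d$, $\sigma\colon\mathbb R^d\to\mathbb R^{d\times d}$ satisfy: there is $\varepsilon\in(0,\mathrm{reach}(\Theta))$ such that $\mu$ and $\sigma$ are bounded on $\Theta^\varepsilon$; $\mu$ is intrinsic Lipschitz continuous on $\mathbb R^d\setminus\Theta$; $\sigma$ is Lipschitz continuous. Then there exists $c\in(0,\infty)$ such that $\|\mu(x)\|+\|\sigma(x)\|\le c(1+\|x\|)$ for all $x\in\mathbb R^d$.
   Context: $\|\cdot\|$ is the Euclidean norm on vectors and the Frobenius norm on matrices. A nonempty $\Theta\subset\mathbb R^d$ is a $C^1$-hypersurface if for every $x\in\Theta$ there are open $U,V$ with $x\in U$ and a $C^1$-diffeomorphism $\phi\colon U\to V$ with $\phi(\Theta\cap U)=(\mathbb R^{d-1}\times\{0\})\cap V$ ($\{0\}$ if $d=1$). $d(x,\Theta)=\inf_{y\in\Theta}\|x-y\|$, $\Theta^\varepsilon=\{x:d(x,\Theta)<\varepsilon\}$, $\mathrm{reach}(\Theta)=\sup\{\varepsilon\ge0:$ every point of $\Theta^\varepsilon$ has a unique nearest point in $\Theta\}$. Intrinsic Lipschitz continuity on $A$: $\|f(x)-f(y)\|\le L\rho_A(x,y)$ for all $x,y\in A$, where $\rho_A(x,y)$ is the infimum of the lengths $l(\gamma)=\sup\sum_k\|\gamma(t_k)-\gamma(t_{k-1})\|$ (over partitions of $[0,1]$)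 of continuous curves $\gamma\colon[0,1]\to A$ from $x$ to $y$. *)

theory Defs
  imports "HOL-Analysis.Analysis"
begin

definition C1_on :: "('a::euclidean_space \<Rightarrow> 'b::euclidean_space) \<Rightarrow> 'a set \<Rightarrow> bool" where
  "C1_on f U \<longleftrightarrow> (\<exists>f'. (\<forall>x\<in>U. (f has_derivative blinfun_apply (f' x)) (at x)) \<and> continuous_on U f')"

definition C1_diffeo :: "('a::euclidean_space \<Rightarrow> 'a) \<Rightarrow> 'a set \<Rightarrow> 'a set \<Rightarrow> bool" where
  "C1_diffeo \<phi> U V \<longleftrightarrow> bij_betw \<phi> U V \<and> C1_on \<phi> U \<and> C1_on (inv_into U \<phi>) V"

text \<open>C^1-hypersurface: locally straightened onto a coordinate hyperplane
  (R^{d-1} x {0}, with the distinguished coordinate i).\<close>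
definition C1_hypersurface :: "(real^'n) set \<Rightarrow> bool" where
  "C1_hypersurface \<Theta> \<longleftrightarrow> \<Theta> \<noteq> {} \<and>
     (\<forall>x\<in>\<Theta>. \<exists>U V \<phi>. open U \<and> open V \<and> x \<in> U \<and> C1_diffeo \<phi> U V \<and>
        (\<exists>i. \<phi> ` (\<Theta> \<inter> U) = {y \<in> V. y $ i = 0}))"

definition nbhd :: "'a::metric_space set \<Rightarrow> real \<Rightarrow> 'a set" where
  "nbhd \<Theta> \<epsilon> = {x. infdist x \<Theta> < \<epsilon>}"

definition reach :: "'a::metric_space set \<Rightarrow> ereal" where
  "reach \<Theta> = Sup (ereal ` {\<epsilon>. \<epsilon> \<ge> 0 \<and>
      (\<forall>x\<in>nbhd \<Theta> \<epsilon>. \<exists>!y. y \<in> \<Theta> \<and> dist x y = infdist x \<Theta>)})"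

definition curve_length :: "(real \<Rightarrow> 'a::real_normed_vector) \<Rightarrow> ereal" where
  "curve_length \<gamma> = Sup {ereal (\<Sum>k<n. norm (\<gamma> (t (Suc k)) - \<gamma> (t k))) | t n.
      t 0 = 0 \<and> t n = 1 \<and> (\<forall>k<n. t k \<le> t (Suc k))}"

definition intrinsic_dist :: "'a::real_normed_vector set \<Rightarrow> 'a \<Rightarrow> 'a \<Rightarrow> ereal" where
  "intrinsic_dist A x y = Inf {curve_length \<gamma> | \<gamma>.
      continuous_on {0..1} \<gamma> \<and> \<gamma> ` {0..1} \<subseteq> A \<and> \<gamma> 0 = x \<and> \<gamma> 1 = y}"

definition intrinsic_lipschitz_on :: "'a::real_normed_vector set \<Rightarrow> ('a \<Rightarrow> 'b::real_normed_vector) \<Rightarrow> bool" where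
  "intrinsic_lipschitz_on A f \<longleftrightarrow> (\<exists>L::real. L \<ge> 0 \<and>
      (\<forall>x\<in>A. \<forall>y\<in>A. ereal (norm (f x - f y)) \<le> ereal L * intrinsic_dist A x y))"

end

theory Submission
  imports Defs
begin

lemma curve_length_line:
  fixes x v :: "'a::real_normed_vector"
  shows "curve_length (\<lambda>s. x + s *\<^sub>R v) \<le> ereal (norm v)"
  unfolding curve_length_def
proof (rule Sup_least, clarify)
  fix t :: "nat \<Rightarrow> real" and n
  assume h: "t 0 = 0" "t n = 1" "\<forall>k<n. t k \<le> t (Suc k)"
  have "(\<Sum>k<n. norm (x + t (Suc k) *\<^sub>R v - (x + t k *\<^sub>R v))) = (\<Sum>k<n. (t (Suc k) - t k) * norm v)"
  proof (rule sum.cong)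
    fix k assume "k \<in> {..<n}"
    then have "t k \<le> t (Suc k)" using h by auto
    have "x + t (Suc k) *\<^sub>R v - (x + t k *\<^sub>R v) = (t (Suc k) - t k) *\<^sub>R v"
      by (simp add: algebra_simps)
    then show "norm (x + t (Suc k) *\<^sub>R v - (x + t k *\<^sub>R v)) = (t (Suc k) - t k) * norm v"
      using \<open>t k \<le> t (Suc k)\<close> by simp
  qed simp
  also have "\<dots> = (t n - t 0) * norm v"
    by (simp add: sum_distrib_right[symmetric] sum_lessThan_telescope)
  finally show "ereal (\<Sum>k<n. norm (x + t (Suc k) *\<^sub>R v - (x + t k *\<^sub>R v))) \<le> ereal (norm v)"
    using h by simp
qed

lemma mu_bound_far:
  fixes \<Theta> :: "'a::real_normed_vector set" and \<mu> :: "'a \<Rightarrow> 'b::real_normed_vector"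
  assumes ne: "\<Theta> \<noteq> {}" and e: "\<epsilon> > 0"
    and M: "\<forall>y\<in>nbhd \<Theta> \<epsilon>. norm (\<mu> y) \<le> M"
    and L: "L \<ge> 0" "\<forall>x\<in>UNIV - \<Theta>. \<forall>y\<in>UNIV - \<Theta>. ereal (norm (\<mu> x - \<mu> y)) \<le> ereal L * intrinsic_dist (UNIV - \<Theta>) x y"
    and th0: "\<theta>0 \<in> \<Theta>"
    and far: "infdist x \<Theta> \<ge> \<epsilon>"
  shows "norm (\<mu> x) \<le> M + L * (norm x + norm \<theta>0)"
proof -
  define \<delta> where "\<delta> = infdist x \<Theta>"
  have "\<exists>\<theta>\<in>\<Theta>. dist x \<theta> < \<delta> + \<epsilon>/2"
  proof -
    have "Inf ((\<lambda>a. dist x a) ` \<Theta>) < \<delta> + \<epsilon>/2"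
      using e infdist_notempty[OF ne, of x] by (simp add: \<delta>_def)
    then have "\<exists>r\<in>(\<lambda>a. dist x a) ` \<Theta>. r < \<delta> + \<epsilon>/2"
      using ne by (intro cInf_lessD) auto
    then show ?thesis by simp
  qed
  then obtain \<theta> where th: "\<theta> \<in> \<Theta>" "dist x \<theta> < \<delta> + \<epsilon>/2" by blast
  have dle: "\<delta> \<le> dist x \<theta>" unfolding \<delta>_def using th(1) by (rule infdist_le)
  define t where "t = \<delta> - \<epsilon>/4"
  define D where "D = dist x \<theta>"
  have Dpos: "D > 0" using dle far e unfolding D_def \<delta>_def by linarith
  define a where "a = t / D"
  have tpos: "t \<ge> 0" using far e unfolding t_def \<delta>_def by linarith
  have tlt: "t < \<delta>" using e unfolding t_def by simp
  have a01: "0 \<le> a" "a \<le> 1" using tpos tlt dle Dpos unfolding a_def D_def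
    by (auto simp: divide_simps)
  define v where "v = a *\<^sub>R (\<theta> - x)"
  define \<gamma> where "\<gamma> = (\<lambda>s::real. x + s *\<^sub>R v)"
  have nv: "norm v = t" unfolding v_def a_def using Dpos tpos
    by (simp add: D_def dist_norm norm_minus_commute)
  have notin: "\<gamma> s \<notin> \<Theta>" if "s \<in> {0..1}" for s
  proof
    assume "\<gamma> s \<in> \<Theta>"
    then have "\<delta> \<le> dist x (\<gamma> s)" unfolding \<delta>_def by (rule infdist_le)
    also have "dist x (\<gamma> s) = s * t" using that nv tpos unfolding \<gamma>_def by (simp add: dist_norm)
    also have "\<dots> \<le> t" using that tpos by (simp add: mult_left_le_one_le)
    finally show False using tlt by simp
  qed
  define z where "z = \<gamma> 1"
  have zn: "z \<notin> \<Theta>" using notin[of 1] by (simp add: z_def)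
  have xn: "x \<notin> \<Theta>" using far e by auto
  have "infdist z \<Theta> \<le> dist z \<theta>" using th(1) by (rule infdist_le)
  also have "z - \<theta> = (1 - a) *\<^sub>R (x - \<theta>)" unfolding z_def \<gamma>_def v_def by (simp add: algebra_simps)
  then have "dist z \<theta> = (1 - a) * D" using a01 by (simp add: dist_norm D_def)
  also have "\<dots> = D - t" using Dpos unfolding a_def by (simp add: algebra_simps)
  finally have "infdist z \<Theta> < \<epsilon>" using th(2) e unfolding D_def t_def by linarith
  then have "norm (\<mu> z) \<le> M" using M by (simp add: nbhd_def)
  have "intrinsic_dist (UNIV - \<Theta>) x z \<le> curve_length \<gamma>"
    unfolding intrinsic_dist_def
    by (rule Inf_lower) (use notin in \<open>auto simp: \<gamma>_def z_def intro!: continuous_intros\<close>)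
  also have "\<dots> \<le> ereal t" unfolding \<gamma>_def using curve_length_line[of x v] nv by simp
  finally have idz: "intrinsic_dist (UNIV - \<Theta>) x z \<le> ereal t" .
  have "ereal (norm (\<mu> x - \<mu> z)) \<le> ereal L * intrinsic_dist (UNIV - \<Theta>) x z"
    using L(2) xn zn by auto
  also have "\<dots> \<le> ereal L * ereal t" using idz L(1) by (intro ereal_mult_left_mono) auto
  finally have "norm (\<mu> x - \<mu> z) \<le> L * t" by simp
  moreover have "t \<le> norm x + norm \<theta>0"
  proof -
    have "t \<le> \<delta>" using tlt by simp
    also have "\<delta> \<le> dist x \<theta>0" unfolding \<delta>_def using th0 by (rule infdist_le)
    also have "\<dots> \<le> norm x + norm \<theta>0" by (simp add: dist_norm norm_triangle_ineq4)
    finally show ?thesis .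
  qed
  ultimately have "norm (\<mu> x - \<mu> z) \<le> L * (norm x + norm \<theta>0)"
    using L(1) by (meson mult_left_mono order_trans)
  moreover have "norm (\<mu> x) \<le> norm (\<mu> x - \<mu> z) + norm (\<mu> z)" using norm_triangle_ineq[of "\<mu> x - \<mu> z" "\<mu> z"] by simp
  ultimately show ?thesis using \<open>norm (\<mu> z) \<le> M\<close> by linarith
qed

theorem lemma1:
  fixes \<Theta> :: "(real^'n) set"
    and \<mu> :: "real^'n \<Rightarrow> real^'n"
    and \<sigma> :: "real^'n \<Rightarrow> real^'n^'n"
  assumes "\<Theta> \<noteq> {}"
    and "C1_hypersurface \<Theta>"
    and "reach \<Theta> > 0"
    and "\<exists>\<epsilon>>0. ereal \<epsilon> < reach \<Theta> \<and> bounded (\<mu> ` nbhd \<Theta> \<epsilon>) \<and> bounded (\<sigma> ` nbhd \<Theta> \<epsilon>)"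
    and "intrinsic_lipschitz_on (UNIV - \<Theta>) \<mu>"
    and "\<exists>L. L-lipschitz_on UNIV \<sigma>"
  shows "\<exists>c>0. \<forall>x. norm (\<mu> x) + norm (\<sigma> x) \<le> c * (1 + norm x)"
proof -
  obtain \<epsilon> where e: "\<epsilon> > 0" "bounded (\<mu> ` nbhd \<Theta> \<epsilon>)" using assms(4) by blast
  obtain M0 where M0: "\<forall>y\<in>nbhd \<Theta> \<epsilon>. norm (\<mu> y) \<le> M0"
    using e(2) unfolding bounded_iff by auto
  define M where "M = max M0 0"
  have M: "\<forall>y\<in>nbhd \<Theta> \<epsilon>. norm (\<mu> y) \<le> M" "M \<ge> 0" using M0 unfolding M_def by force+
  obtain L where L: "L \<ge> 0" "\<forall>x\<in>UNIV - \<Theta>. \<forall>y\<in>UNIV - \<Theta>. ereal (norm (\<mu> x - \<mu> y)) \<le> ereal L * intrinsic_dist (UNIV - \<Theta>) x y"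
    using assms(5) unfolding intrinsic_lipschitz_on_def by blast
  obtain K where K: "K-lipschitz_on UNIV \<sigma>" using assms(6) by blast
  have K0: "K \<ge> 0" using K lipschitz_on_nonneg by blast
  obtain \<theta>0 where th0: "\<theta>0 \<in> \<Theta>" using assms(1) by blast
  define c where "c = M + L * norm \<theta>0 + L + norm (\<sigma> 0) + K + 1"
  have cpos: "c > 0"
  proof -
    have "0 \<le> L * norm \<theta>0" using L(1) by simp
    moreover have "0 \<le> norm (\<sigma> 0)" by simp
    ultimately show ?thesis unfolding c_def using M(2) L(1) K0 by linarith
  qed
  have mu: "norm (\<mu> x) \<le> M + L * norm \<theta>0 + L * norm x" for x
  proof (cases "infdist x \<Theta> < \<epsilon>")
    case True
    then have "norm (\<mu> x) \<le> M" using M by (simp add: nbhd_def)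
    then show ?thesis using L(1) by (simp add: add_increasing2)
  next
    case False
    then show ?thesis using mu_bound_far[OF assms(1) e(1) M(1) L th0, of x]
      by (simp add: algebra_simps)
  qed
  have sg: "norm (\<sigma> x) \<le> norm (\<sigma> 0) + K * norm x" for x
  proof -
    have "dist (\<sigma> x) (\<sigma> 0) \<le> K * dist x 0" using K by (rule lipschitz_onD) auto
    then show ?thesis by (simp add: dist_norm) (metis norm_triangle_sub add.commute order_trans add_left_mono)
  qed
  have "norm (\<mu> x) + norm (\<sigma> x) \<le> c * (1 + norm x)" for x
  proof -
    have nx: "norm x \<ge> 0" by simp
    have "norm (\<mu> x) + norm (\<sigma> x) \<le> (M + L * norm \<theta>0 + norm (\<sigma> 0)) + (L + K) * norm x"
      using mu[of x] sg[of x] by (simp add: algebra_simps)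
    also have "\<dots> \<le> c * 1 + c * norm x"
      apply (rule add_mono)
      subgoal unfolding c_def using L(1) K0 by simp
      subgoal by (rule mult_right_mono) (use M(2) L(1) K0 in \<open>auto simp: c_def\<close>)
      done
    finally show ?thesis by (simp add: distrib_left)
  qed
  then show ?thesis using cpos by blast
qed

end
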